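(* Assume $\sigma:=\sup_{g\in\mathcal G}S(g)<\infty$. For any probability measure $Q$ on $\mathcal G$, any finite Borel partition $\mathcal A$ of $\mathcal M$, and any $g,g'\in\mathcal G$, $$\bigl|\hat S_{Q,\mathcal A}(g)-\hat S_{Q,\mathcal A}(g')\bigr|\le\sigma\bigl(g(\mathcal M)+g'(\mathcal M)\bigr).$$
   Context: $\mathcal M$ is a complete separable metric space; $\mathcal G$ the finite integer-valued Borel measures on $\mathcal M$; $S:\mathcal G\to\mathbb R_+$ Borel; $n$ a positive integer. $g_A(B):=g(B\cap A)$; $X$ is the canonical random element of $\mathcal G$ and $Q[\cdot\mid X_A=g_A]$ a regular conditional distribution. $\hat S_{Q,\mathcal A}(g):=-n\sum_{A\in\mathcal A}\bigl(\log Q[e^{-S(X)/n}\mid X_A=g_A]-\log Q[e^{-S(X)/n}]\bigr)$. *)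

theory Defs
  imports "HOL-Probability.Probability"
begin

definition Gset :: "'m::topological_space measure set" where
  "Gset = {g. sets g = sets borel \<and> finite_measure g \<and>
              (\<forall>B\<in>sets borel. \<exists>k::nat. emeasure g B = of_nat k)}"

definition Gmeas :: "'m::topological_space measure measure" where
  "Gmeas = (SUP B \<in> sets (borel :: 'm measure). vimage_algebra Gset (\<lambda>g. emeasure g B) borel)"

definition restr :: "'m::topological_space set \<Rightarrow> 'm measure \<Rightarrow> 'm measure" where
  "restr A g = measure_of (space g) (sets g) (\<lambda>B. emeasure g (B \<inter> A))"

text \<open>K is a regular conditional distribution of the canonical X under Q given X_A:
  a probability kernel from (values of) X_A to G with
  Q(X in E, X_A in F) = integral over {X_A in F} of K(X_A)(E) dQ.\<close>
definition is_rcd :: "'m::topological_space measure measure \<Rightarrow> 'm set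
    \<Rightarrow> ('m measure \<Rightarrow> 'm measure measure) \<Rightarrow> bool" where
  "is_rcd Q A K \<longleftrightarrow>
     K \<in> Gmeas \<rightarrow>\<^sub>M prob_algebra Gmeas \<and>
     (\<forall>E\<in>sets Gmeas. \<forall>F\<in>sets Gmeas.
        emeasure Q {g\<in>space Q. g \<in> E \<and> restr A g \<in> F} =
        (\<integral>\<^sup>+ g. indicator F (restr A g) * emeasure (K (restr A g)) E \<partial>Q))"

text \<open>S-hat_{Q,A}(g), with K A the chosen regular conditional distribution given X_A.\<close>
definition Shat :: "nat \<Rightarrow> ('m::topological_space measure \<Rightarrow> real) \<Rightarrow> 'm measure measure
    \<Rightarrow> ('m set \<Rightarrow> 'm measure \<Rightarrow> 'm measure measure) \<Rightarrow> 'm set set \<Rightarrow> 'm measure \<Rightarrow> real" where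
  "Shat n S Q K \<A> g = - real n * (\<Sum>A\<in>\<A>.
      ln (\<integral>x. exp (- S x / real n) \<partial>(K A (restr A g))) - ln (\<integral>x. exp (- S x / real n) \<partial>Q))"

end

theory Submission
  imports Defs
begin

lemma space_Gmeas: "space (Gmeas :: 'm::topological_space measure measure) = Gset"
  unfolding Gmeas_def space_Sup_eq_UN by auto

lemma restr_density:
  assumes "A \<in> sets g"
  shows "restr A g = density g (indicator A)"
proof -
  have "restr A g = measure_of (space g) (sets g) (emeasure (density g (indicator A)))"
    unfolding restr_def
    by (rule measure_of_eq) (auto simp: sets.space_closed sets.sigma_sets_eq emeasure_restricted[OF assms] Int_commute)
  also have "\<dots> = density g (indicator A)"
    using measure_of_of_measure[of "density g (indicator A)"] by simp
  finally show ?thesis .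
qed

lemma restr_Gset:
  assumes "A \<in> sets borel" "g \<in> Gset"
  shows "restr A g \<in> Gset"
proof -
  have sg: "sets g = sets borel" and fm: "finite_measure g"
    and int: "\<forall>B\<in>sets borel. \<exists>k::nat. emeasure g B = of_nat k"
    using assms(2) by (auto simp: Gset_def)
  have Ag: "A \<in> sets g" using assms sg by simp
  have r: "restr A g = density g (indicator A)" by (rule restr_density[OF Ag])
  have em: "emeasure (restr A g) B = emeasure g (A \<inter> B)" if "B \<in> sets borel" for B
    using r emeasure_restricted[OF Ag] that sg by simp
  have "sets (restr A g) = sets borel" using r sg by simp
  moreover have "finite_measure (restr A g)"
  proof (rule finite_measureI)
    have "space (restr A g) = space g" using r by simp
    then have "emeasure (restr A g) (space (restr A g)) = emeasure g (A \<inter> space g)"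
      using em[of "space g"] sg by (metis sets.top)
    also have "\<dots> \<noteq> \<infinity>" using fm by (simp add: finite_measure.emeasure_finite)
    finally show "emeasure (restr A g) (space (restr A g)) \<noteq> \<infinity>" .
  qed
  moreover have "\<forall>B\<in>sets borel. \<exists>k::nat. emeasure (restr A g) B = of_nat k"
    using em int assms(1) by auto
  ultimately show ?thesis by (simp add: Gset_def)
qed

lemma restr_zero:
  assumes "A \<in> sets borel" "g \<in> Gset" "g' \<in> Gset" "emeasure g A = 0" "emeasure g' A = 0"
  shows "restr A g = restr A g'"
proof -
  have sg: "sets g = sets borel" "sets g' = sets borel"
    using assms(2,3) by (auto simp: Gset_def)
  have r: "restr A g = density g (indicator A)" "restr A g' = density g' (indicator A)"
    using restr_density sg assms(1) by auto
  show ?thesis unfolding r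
  proof (rule measure_eqI)
    show "sets (density g (indicator A)) = sets (density g' (indicator A))" using sg by simp
    fix X assume "X \<in> sets (density g (indicator A))"
    then have X: "X \<in> sets borel" using sg by simp
    have "emeasure g (A \<inter> X) = 0"
      using emeasure_mono[of "A \<inter> X" A g] assms sg X by auto
    moreover have "emeasure g' (A \<inter> X) = 0"
      using emeasure_mono[of "A \<inter> X" A g'] assms sg X by auto
    ultimately show "emeasure (density g (indicator A)) X = emeasure (density g' (indicator A)) X"
      using emeasure_restricted[of A g X] emeasure_restricted[of A g' X] sg X assms(1) by simp
  qed
qed

lemma card_pos_le:
  assumes "g \<in> Gset" "finite \<A>" "disjoint \<A>" "\<A> \<subseteq> sets borel"
  shows "real (card {A\<in>\<A>. emeasure g A \<noteq> 0}) \<le> measure g UNIV"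
proof -
  define C where "C = {A\<in>\<A>. emeasure g A \<noteq> 0}"
  have sg: "sets g = sets borel" and fm: "finite_measure g"
    and int: "\<forall>B\<in>sets borel. \<exists>k::nat. emeasure g B = of_nat k"
    using assms(1) by (auto simp: Gset_def)
  have fC: "finite C" using assms(2) by (simp add: C_def)
  have ge1: "1 \<le> measure g A" if "A \<in> C" for A
  proof -
    from that have "A \<in> sets borel" "emeasure g A \<noteq> 0" using assms(4) by (auto simp: C_def)
    then obtain k :: nat where k: "emeasure g A = of_nat k" "k \<noteq> 0" using int by fastforce
    then have "measure g A = real k" by (simp add: measure_def)
    then show ?thesis using k(2) by simp
  qed
  have "real (card C) = (\<Sum>A\<in>C. 1)" by simp
  also have "\<dots> \<le> (\<Sum>A\<in>C. measure g A)" using ge1 by (intro sum_mono) auto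
  also have "\<dots> = measure g (\<Union>C)"
  proof -
    have "measure g (\<Union>i\<in>C. id i) = (\<Sum>i\<in>C. measure g (id i))"
    proof (rule measure_finite_Union)
      show "finite C" by fact
      show "id ` C \<subseteq> sets g" using assms(4) sg by (auto simp: C_def)
      show "disjoint_family_on id C" using assms(3)
        unfolding disjoint_family_on_def disjoint_def C_def by auto
      show "emeasure g (id i) \<noteq> \<infinity>" for i using fm by (simp add: finite_measure.emeasure_finite)
    qed
    then show ?thesis by simp
  qed
  also have "\<dots> \<le> measure g UNIV"
  proof (rule finite_measure.finite_measure_mono[OF fm])
    show "UNIV \<in> sets g" using sg by (metis sets.top space_borel)
  qed auto
  finally show ?thesis by (simp add: C_def)
qed

theorem lemma7p3:
  fixes S :: "'m::polish_space measure \<Rightarrow> real"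
    and n :: nat
    and Q :: "'m measure measure"
    and \<A> :: "'m set set"
    and K :: "'m set \<Rightarrow> 'm measure \<Rightarrow> 'm measure measure"
    and g g' :: "'m measure"
  assumes "n > 0"
    and "S \<in> borel_measurable Gmeas"
    and "\<forall>h\<in>Gset. S h \<ge> 0"
    and "bdd_above (S ` Gset)"
    and "prob_space Q" and "sets Q = sets Gmeas"
    and "finite \<A>" and "partition_on UNIV \<A>" and "\<A> \<subseteq> sets borel"
    and "\<forall>A\<in>\<A>. is_rcd Q A (K A)"
    and "g \<in> Gset" and "g' \<in> Gset"
  shows "\<bar>Shat n S Q K \<A> g - Shat n S Q K \<A> g'\<bar>
           \<le> Sup (S ` Gset) * (measure g UNIV + measure g' UNIV)"
proof -
  define \<sigma> where "\<sigma> = Sup (S ` Gset)"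
  have Sle: "S h \<le> \<sigma>" if "h \<in> Gset" for h
    unfolding \<sigma>_def using assms(4) that by (intro cSup_upper) auto
  have S0: "0 \<le> S h" if "h \<in> Gset" for h using assms(3) that by auto
  have \<sigma>0: "0 \<le> \<sigma>" using Sle[OF assms(11)] S0[OF assms(11)] by linarith
  have npos: "0 < real n" using assms(1) by simp
  define I where "I A h = (\<integral>x. exp (- S x / real n) \<partial>(K A (restr A h)))" for A h
  have Ib: "exp (- \<sigma> / real n) \<le> I A h \<and> I A h \<le> 1" if A: "A \<in> \<A>" and h: "h \<in> Gset" for A h
  proof -
    have rh: "restr A h \<in> space Gmeas" using restr_Gset[of A h] A h assms(9) space_Gmeas by auto
    have "K A \<in> Gmeas \<rightarrow>\<^sub>M prob_algebra Gmeas" using assms(10) A by (simp add: is_rcd_def)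
    then have "K A (restr A h) \<in> space (prob_algebra Gmeas)" using rh by (rule measurable_space)
    then have ps: "prob_space (K A (restr A h))" and ss: "sets (K A (restr A h)) = sets Gmeas"
      by (auto simp: space_prob_algebra)
    define M where "M = K A (restr A h)"
    have ps': "prob_space M" and ss': "sets M = sets Gmeas" using ps ss by (auto simp: M_def)
    have sp: "space M = Gset" using sets_eq_imp_space_eq[OF ss'] space_Gmeas by simp
    have Sm: "S \<in> borel_measurable M" unfolding measurable_cong_sets[OF ss' refl] by (rule assms(2))
    have fm: "(\<lambda>x. exp (- S x / real n)) \<in> borel_measurable M" using Sm by measurable
    have bnd: "exp (- \<sigma> / real n) \<le> exp (- S x / real n) \<and> exp (- S x / real n) \<le> 1"
      if "x \<in> space M" for x
    proof -
      have "S x \<le> \<sigma>" "0 \<le> S x" using that sp Sle S0 by auto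
      then have "- \<sigma> / real n \<le> - S x / real n" "- S x / real n \<le> 0"
        using npos by (auto simp: divide_right_mono)
      then show ?thesis by auto
    qed
    interpret prob_space M by (rule ps')
    have integ: "integrable M (\<lambda>x. exp (- S x / real n))"
      by (rule integrable_const_bound[where B=1]) (use bnd fm in auto)
    have "exp (- \<sigma> / real n) \<le> (\<integral>x. exp (- S x / real n) \<partial>M)"
      by (rule integral_ge_const[OF integ]) (use bnd in auto)
    moreover have "(\<integral>x. exp (- S x / real n) \<partial>M) \<le> 1"
      by (rule integral_le_const[OF integ]) (use bnd in auto)
    ultimately show ?thesis by (simp add: I_def M_def)
  qed
  have lnb: "- \<sigma> / real n \<le> ln (I A h) \<and> ln (I A h) \<le> 0" if "A \<in> \<A>" "h \<in> Gset" for A h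
  proof -
    have a: "exp (- \<sigma> / real n) \<le> I A h" "I A h \<le> 1" using Ib[OF that] by auto
    have p: "0 < I A h" using a(1) by (meson exp_gt_zero less_le_trans)
    have "ln (exp (- \<sigma> / real n)) \<le> ln (I A h)" using a(1) p by (subst ln_le_cancel_iff) auto
    moreover have "ln (I A h) \<le> 0" using a(2) p by simp
    ultimately show ?thesis by simp
  qed
  define d where "d A = ln (I A g) - ln (I A g')" for A
  define c where "c = ln (\<integral>x. exp (- S x / real n) \<partial>Q)"
  have db: "\<bar>d A\<bar> \<le> \<sigma> / real n" if "A \<in> \<A>" for A
    using lnb[OF that assms(11)] lnb[OF that assms(12)] unfolding d_def by linarith
  define B where "B = {A\<in>\<A>. emeasure g A \<noteq> 0} \<union> {A\<in>\<A>. emeasure g' A \<noteq> 0}"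
  have BA: "B \<subseteq> \<A>" by (auto simp: B_def)
  have fB: "finite B" using BA assms(7) finite_subset by blast
  have d0: "d A = 0" if "A \<in> \<A> - B" for A
  proof -
    have "restr A g = restr A g'"
      using that assms(9,11,12) by (intro restr_zero) (auto simp: B_def)
    then show ?thesis by (simp add: d_def I_def)
  qed
  have "Shat n S Q K \<A> g - Shat n S Q K \<A> g' = - real n * (\<Sum>A\<in>\<A>. d A)"
    unfolding Shat_def d_def I_def
    by (simp add: sum_subtractf algebra_simps)
  then have "\<bar>Shat n S Q K \<A> g - Shat n S Q K \<A> g'\<bar> = real n * \<bar>\<Sum>A\<in>\<A>. d A\<bar>"
    by (simp add: abs_mult)
  also have "(\<Sum>A\<in>\<A>. d A) = (\<Sum>A\<in>B. d A)"
    using d0 BA assms(7) by (intro sum.mono_neutral_right) auto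
  also have "\<bar>\<Sum>A\<in>B. d A\<bar> \<le> (\<Sum>A\<in>B. \<bar>d A\<bar>)" by (rule sum_abs)
  also have "\<dots> \<le> (\<Sum>A\<in>B. \<sigma> / real n)" using db BA by (intro sum_mono) auto
  also have "\<dots> = real (card B) * (\<sigma> / real n)" by simp
  finally have 1: "\<bar>Shat n S Q K \<A> g - Shat n S Q K \<A> g'\<bar> \<le> real (card B) * \<sigma>"
    using npos by (simp add: mult_left_mono)
  have disj: "disjoint \<A>" using assms(8) by (simp add: partition_on_def)
  have "card B \<le> card {A\<in>\<A>. emeasure g A \<noteq> 0} + card {A\<in>\<A>. emeasure g' A \<noteq> 0}"
    unfolding B_def by (rule card_Un_le)
  then have "real (card B) \<le> measure g UNIV + measure g' UNIV"
    using card_pos_le[OF assms(11,7) disj assms(9)] card_pos_le[OF assms(12,7) disj assms(9)]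
    by linarith
  then have "real (card B) * \<sigma> \<le> \<sigma> * (measure g UNIV + measure g' UNIV)"
    using \<sigma>0 by (simp add: mult.commute mult_left_mono)
  with 1 show ?thesis unfolding \<sigma>_def by linarith
qed

end
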